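(* Let $a>0$ and $0\le r_0<a$, and consider, in polar coordinates $(r,\theta)$ about a pole $O$, the circle of radius $a$ whose centre $C$ has polar coordinates $(r_0,\theta_0)$, so that the ray from $O$ in direction $\theta$ meets the circle at distance $$r(\theta)=r_0\cos(\theta-\theta_0)+\sqrt{a^2-r_0^2\sin^2(\theta-\theta_0)} .$$ Let $\theta_1<\theta_2<\theta_1+\pi$ and set $\theta_3=\theta_1+\pi$, $\theta_4=\theta_2+\pi$, $\theta_5=\theta_1+2\pi$. The two lines through $O$ in the directions $\theta_1,\theta_2$ divide the disc into four sectors with areas $S_i=\frac12\int_{\theta_i}^{\theta_{i+1}} r(\theta)^2\,d\theta$, $1\le i\le 4$. Then $$S_1+S_3=a^2(\theta_2-\theta_1)+r_0^2\sin(\theta_2-\theta_1)\cos(\theta_1+\theta_2-2\theta_0),\qquad S_2+S_4=a^2(\pi-\theta_2+\theta_1)-r_0^2\sin(\theta_2-\theta_1)\cos(\theta_1+\theta_2-2\theta_0),$$ and $S_1+S_3=S_2+S_4$ if and only if $$\frac{r_0^2}{2}\Big[\sin 2(\theta_2-\theta_0)-\sin 2(\theta_1-\theta_0)\Big]+a^2\Big(\theta_2-\theta_1-\frac{\pi}{2}\Big)=0 .$$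
   Context: Polar coordinates are taken about the pole $O$; the point with polar coordinates $(r,\theta)$ is $O+r(\cos\theta,\sin\theta)$. The sector $S_i$ is the region $\{O+\rho(\cos\theta,\sin\theta):\ \theta_i\le\theta\le\theta_{i+1},\ 0\le\rho\le r(\theta)\}$. *)

theory Defs
  imports "HOL-Analysis.Analysis"
begin

definition circ_r :: "real \<Rightarrow> real \<Rightarrow> real \<Rightarrow> real \<Rightarrow> real" where
  "circ_r a r0 th0 th = r0 * cos (th - th0) + sqrt (a^2 - r0^2 * (sin (th - th0))^2)"

definition sector_area :: "real \<Rightarrow> real \<Rightarrow> real \<Rightarrow> real \<Rightarrow> real \<Rightarrow> real" where
  "sector_area a r0 th0 alpha beta = (1/2) * integral {alpha..beta} (\<lambda>th. (circ_r a r0 th0 th)^2)"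

end

theory Submission
  imports Defs
begin

lemma pair_id:
  fixes a r0 th0 x :: real
  assumes "0 \<le> r0" "r0 < a"
  shows "(circ_r a r0 th0 x)^2 + (circ_r a r0 th0 (x + pi))^2 = 2*a^2 + 2*r0^2 * cos (2*(x - th0))"
proof -
  define c where "c = cos (x - th0)"
  define s where "s = sin (x - th0)"
  have c2: "cos (x + pi - th0) = - c" unfolding c_def
    by (metis add.commute add_diff_eq cos_periodic_pi2)
  have s2: "sin (x + pi - th0) = - s" unfolding s_def
    by (metis add.commute add_diff_eq sin_periodic_pi2)
  have "s^2 + c^2 = 1" unfolding s_def c_def by simp
  hence "s^2 \<le> 1" using zero_le_power2[of c] by linarith
  hence "r0^2 * s^2 \<le> r0^2" by (simp add: mult_left_le)
  moreover have "r0^2 \<le> a^2" using assms by (simp add: power_mono)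
  ultimately have nn: "0 \<le> a^2 - r0^2 * s^2" by linarith
  define q where "q = sqrt (a^2 - r0^2 * s^2)"
  have q2: "q^2 = a^2 - r0^2 * s^2" unfolding q_def using nn by simp
  have cs: "c^2 + s^2 = 1" unfolding c_def s_def by simp
  have cd: "cos (2*(x - th0)) = c^2 - s^2" unfolding c_def s_def by (rule cos_double)
  have "(circ_r a r0 th0 x)^2 + (circ_r a r0 th0 (x + pi))^2
      = (r0*c + q)^2 + (- r0*c + q)^2"
    unfolding circ_r_def q_def using c2 s2 by (simp add: c_def s_def)
  also have "\<dots> = 2*r0^2*c^2 + 2*q^2" by (simp add: power2_eq_square algebra_simps)
  also have "\<dots> = 2*a^2 + 2*r0^2 * cos (2*(x - th0))"
    by (simp only: q2 cd) (simp add: algebra_simps)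
  finally show ?thesis .
qed

lemma cont_r: "continuous_on S (\<lambda>th. (circ_r a r0 th0 th)^2)"
  unfolding circ_r_def by (intro continuous_intros)

lemma pair_area:
  fixes a r0 th0 u v :: real
  assumes "0 \<le> r0" "r0 < a" "u \<le> v"
  shows "sector_area a r0 th0 u v + sector_area a r0 th0 (u + pi) (v + pi)
     = a^2 * (v - u) + r0^2 / 2 * (sin (2*(v - th0)) - sin (2*(u - th0)))"
proof -
  define f where "f = (\<lambda>th. (circ_r a r0 th0 th)^2)"
  have i1: "(f has_integral integral {u..v} f) {u..v}"
    unfolding f_def by (intro integrable_integral integrable_continuous_interval cont_r)
  have i2': "(f has_integral integral {u+pi..v+pi} f) {u+pi..v+pi}"
    unfolding f_def by (intro integrable_integral integrable_continuous_interval cont_r)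
  hence i2: "(f has_integral integral {u+pi..v+pi} f) (cbox (u+pi) (v+pi))"
    by (simp only: interval_cbox)
  have "((\<lambda>x. f (1 *\<^sub>R x + pi)) has_integral (integral {u+pi..v+pi} f /\<^sub>R 1 ^ DIM(real)))
           (cbox ((u+pi - pi) /\<^sub>R 1) ((v+pi - pi) /\<^sub>R 1))"
    using has_integral_affinity'[OF i2, of 1 pi] by simp
  hence i3: "((\<lambda>x. f (x + pi)) has_integral integral {u+pi..v+pi} f) {u..v}"
    by (simp only: scaleR_one power_one inverse_1 add_diff_cancel interval_cbox)
  have sum: "((\<lambda>x. f x + f (x + pi)) has_integral
      (integral {u..v} f + integral {u+pi..v+pi} f)) {u..v}"
    by (rule has_integral_add[OF i1 i3])
  define G where "G = (\<lambda>x::real. 2*a^2*x + r0^2 * sin (2*(x - th0)))"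
  have "((\<lambda>x. 2*a^2 + 2*r0^2 * cos (2*(x - th0))) has_integral (G v - G u)) {u..v}"
  proof (rule fundamental_theorem_of_calculus[OF assms(3)])
    fix x assume "x \<in> {u..v}"
    show "(G has_vector_derivative 2*a^2 + 2*r0^2 * cos (2*(x - th0))) (at x within {u..v})"
      unfolding G_def has_real_derivative_iff_has_vector_derivative[symmetric]
      by (auto intro!: derivative_eq_intros)
  qed
  moreover have "(\<lambda>x. f x + f (x + pi)) = (\<lambda>x. 2*a^2 + 2*r0^2 * cos (2*(x - th0)))"
    unfolding f_def using pair_id[OF assms(1,2)] by auto
  ultimately have "integral {u..v} f + integral {u+pi..v+pi} f = G v - G u"
    using sum has_integral_unique by metis
  thus ?thesis unfolding sector_area_def f_def[symmetric] G_def
    by (simp add: algebra_simps)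
qed

theorem mainTheorem3:
  fixes a r0 th0 th1 th2 :: real
  assumes "a > 0" and "0 \<le> r0" and "r0 < a"
    and "th1 < th2" and "th2 < th1 + pi"
  defines "th3 \<equiv> th1 + pi" and "th4 \<equiv> th2 + pi" and "th5 \<equiv> th1 + 2 * pi"
  defines "S1 \<equiv> sector_area a r0 th0 th1 th2"
    and "S2 \<equiv> sector_area a r0 th0 th2 th3"
    and "S3 \<equiv> sector_area a r0 th0 th3 th4"
    and "S4 \<equiv> sector_area a r0 th0 th4 th5"
  shows "S1 + S3 = a^2 * (th2 - th1) + r0^2 * sin (th2 - th1) * cos (th1 + th2 - 2 * th0) \<and>
         S2 + S4 = a^2 * (pi - th2 + th1) - r0^2 * sin (th2 - th1) * cos (th1 + th2 - 2 * th0) \<and>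
         (S1 + S3 = S2 + S4 \<longleftrightarrow>
         r0^2 / 2 * (sin (2 * (th2 - th0)) - sin (2 * (th1 - th0))) + a^2 * (th2 - th1 - pi / 2) = 0)"
proof -
  have trig: "sin (2*(v - th0)) - sin (2*(u - th0)) = 2 * sin (v - u) * cos (u + v - 2*th0)" for u v :: real
  proof -
    have "sin (2*(v - th0)) = sin ((u + v - 2*th0) + (v - u))" by (simp add: algebra_simps)
    moreover have "sin (2*(u - th0)) = sin ((u + v - 2*th0) - (v - u))" by (simp add: algebra_simps)
    moreover have "sin (p + d) - sin (p - d) = 2 * sin d * cos p" for p d :: real
      by (simp add: sin_add sin_diff)
    ultimately show ?thesis by presburger
  qed
  have A: "S1 + S3 = a^2 * (th2 - th1) + r0^2 / 2 * (sin (2*(th2 - th0)) - sin (2*(th1 - th0)))"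
    unfolding S1_def S3_def th3_def th4_def
    using pair_area[OF assms(2,3), of th1 th2 th0] assms(4) by simp
  have B0: "S2 + S4 = a^2 * (th1 + pi - th2) + r0^2 / 2 * (sin (2*(th1 + pi - th0)) - sin (2*(th2 - th0)))"
    unfolding S2_def S4_def th3_def th4_def th5_def
    using pair_area[OF assms(2,3), of th2 "th1 + pi" th0] assms(5)
    by (simp add: algebra_simps)
  have "sin (2*(th1 + pi - th0)) = sin (2*(th1 - th0))"
  proof -
    have "sin (2*(th1 + pi - th0)) = sin (2*(th1 - th0) + 2*pi)"
      by (rule arg_cong[where f=sin]) (simp add: algebra_simps)
    also have "\<dots> = sin (2*(th1 - th0))" by (rule sin_periodic)
    finally show ?thesis .
  qed
  hence B: "S2 + S4 = a^2 * (th1 + pi - th2) - r0^2 / 2 * (sin (2*(th2 - th0)) - sin (2*(th1 - th0)))"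
    using B0 by (simp add: right_diff_distrib)
  have T: "r0^2 / 2 * (sin (2*(th2 - th0)) - sin (2*(th1 - th0))) = r0^2 * sin (th2 - th1) * cos (th1 + th2 - 2 * th0)"
    using trig[of th2 th1] by simp
  have C1: "S1 + S3 = a^2 * (th2 - th1) + r0^2 * sin (th2 - th1) * cos (th1 + th2 - 2 * th0)"
    using A T by simp
  have C2: "S2 + S4 = a^2 * (pi - th2 + th1) - r0^2 * sin (th2 - th1) * cos (th1 + th2 - 2 * th0)"
  proof -
    have "a^2*(th1+pi-th2) = a^2*(pi - th2 + th1)" by simp
    thus ?thesis using B T by linarith
  qed
  have C3: "(S1 + S3 = S2 + S4) = (r0^2 / 2 * (sin (2 * (th2 - th0)) - sin (2 * (th1 - th0))) + a^2 * (th2 - th1 - pi / 2) = 0)"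
  proof -
    have L: "a^2*(th2-th1-pi/2) = (a^2*(th2-th1) - a^2*(th1+pi-th2))/2" by (simp add: algebra_simps)
    have gen: "\<And>x y K1 K2 E :: real. x = K1 + E \<Longrightarrow> y = K2 - E \<Longrightarrow> (x = y) = (E + (K1 - K2)/2 = 0)"
      by (auto simp: field_simps)
    show ?thesis unfolding L by (rule gen[OF A B])
  qed
  show ?thesis using C1 C2 C3 by blast
qed

end
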